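(* Let $n\ge1$, $d\ge2$. The elements $\delta_0,\dots,\delta_n\in\pi_1(\mathcal U_{n,d},[x_0^d+\cdots+x_n^d])$ pairwise commute and satisfy $\delta_0\delta_1\cdots\delta_n=1$.
   Context: $\mathcal U_{n,d}\subset\mathbf P^{N-1}$ is the complement of the discriminant in the projective space of degree-$d$ forms in $x_0,\dots,x_n$ (forms defining singular hypersurfaces removed). For $\kappa=0,\dots,n$, $\delta_\kappa$ is the class of the loop $t\in[0,2\pi]\mapsto\big[e^{it}x_\kappa^d+\sum_{\lambda\ne\kappa}x_\lambda^d\big]$ in the Fermat family $\{[a_0x_0^d+\cdots+a_nx_n^d]\}$. *)

theory Defs
  imports "HOL-Analysis.Analysis"
begin

definition deg_monos :: "nat \<Rightarrow> nat \<Rightarrow> (nat \<Rightarrow> nat) set" where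
  "deg_monos n d = {\<alpha>. (\<forall>v>n. \<alpha> v = 0) \<and> sum \<alpha> {0..n} = d}"

definition is_form :: "nat \<Rightarrow> nat \<Rightarrow> ((nat \<Rightarrow> nat) \<Rightarrow> complex) \<Rightarrow> bool" where
  "is_form n d F \<longleftrightarrow> (\<forall>\<alpha>. \<alpha> \<notin> deg_monos n d \<longrightarrow> F \<alpha> = 0)"

definition form_eval :: "nat \<Rightarrow> nat \<Rightarrow> ((nat \<Rightarrow> nat) \<Rightarrow> complex) \<Rightarrow> (nat \<Rightarrow> complex) \<Rightarrow> complex" where
  "form_eval n d F x = (\<Sum>\<alpha>\<in>deg_monos n d. F \<alpha> * (\<Prod>v\<in>{0..n}. x v ^ \<alpha> v))"

definition singular_form :: "nat \<Rightarrow> nat \<Rightarrow> ((nat \<Rightarrow> nat) \<Rightarrow> complex) \<Rightarrow> bool" where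
  "singular_form n d F \<longleftrightarrow>
     (\<exists>x. (\<exists>v\<le>n. x v \<noteq> 0) \<and>
          (\<forall>v\<le>n. ((\<lambda>t. form_eval n d F (x(v := t))) has_field_derivative 0) (at (x v))))"

text \<open>Projective point [F] realized (homeomorphically) as the rank-one Hermitian projector
  F F^* / |F|^2; this embeds P^{N-1} into a space of matrices.\<close>
definition proj :: "nat \<Rightarrow> nat \<Rightarrow> ((nat \<Rightarrow> nat) \<Rightarrow> complex) \<Rightarrow> ((nat \<Rightarrow> nat) \<times> (nat \<Rightarrow> nat) \<Rightarrow> complex)" where
  "proj n d F = (\<lambda>(\<alpha>, \<beta>). F \<alpha> * cnj (F \<beta>) / complex_of_real (\<Sum>\<gamma>\<in>deg_monos n d. (cmod (F \<gamma>))\<^sup>2))"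

definition U_nd :: "nat \<Rightarrow> nat \<Rightarrow> ((nat \<Rightarrow> nat) \<times> (nat \<Rightarrow> nat) \<Rightarrow> complex) set" where
  "U_nd n d = proj n d ` {F. is_form n d F \<and> F \<noteq> (\<lambda>_. 0) \<and> \<not> singular_form n d F}"

definition fermat :: "nat \<Rightarrow> nat \<Rightarrow> (nat \<Rightarrow> complex) \<Rightarrow> ((nat \<Rightarrow> nat) \<Rightarrow> complex)" where
  "fermat n d a = (\<lambda>\<alpha>. \<Sum>v\<in>{0..n}. if \<alpha> = (\<lambda>w. if w = v then d else 0) then a v else 0)"

definition base_pt :: "nat \<Rightarrow> nat \<Rightarrow> ((nat \<Rightarrow> nat) \<times> (nat \<Rightarrow> nat) \<Rightarrow> complex)" where
  "base_pt n d = proj n d (fermat n d (\<lambda>_. 1))"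

text \<open>The loop delta_kappa, reparametrized from [0,2pi] to [0,1].\<close>
definition delta :: "nat \<Rightarrow> nat \<Rightarrow> nat \<Rightarrow> real \<Rightarrow> ((nat \<Rightarrow> nat) \<times> (nat \<Rightarrow> nat) \<Rightarrow> complex)" where
  "delta n d \<kappa> = (\<lambda>t. proj n d (fermat n d (\<lambda>v. if v = \<kappa> then exp (2 * pi * \<i> * complex_of_real t) else 1)))"

fun delta_prod :: "nat \<Rightarrow> nat \<Rightarrow> nat \<Rightarrow> real \<Rightarrow> ((nat \<Rightarrow> nat) \<times> (nat \<Rightarrow> nat) \<Rightarrow> complex)" where
  "delta_prod n d 0 = delta n d 0"
| "delta_prod n d (Suc k) = delta_prod n d k +++ delta n d (Suc k)"

end

theory Submission imports Defs begin

definition Ev :: "nat \<Rightarrow> nat \<Rightarrow> nat \<Rightarrow> nat" where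
  "Ev d v = (\<lambda>w. if w = v then d else 0)"

lemma Ev_inj: "d \<ge> 1 \<Longrightarrow> Ev d v = Ev d w \<longleftrightarrow> v = w"
  unfolding Ev_def by (metis not_one_le_zero)

lemma fermat_Ev: assumes "d \<ge> 1" "v \<le> n" shows "fermat n d a (Ev d v) = a v"
proof -
  have "fermat n d a (Ev d v) = (\<Sum>w\<in>{0..n}. if v = w then a w else 0)"
    unfolding fermat_def Ev_def[symmetric] using Ev_inj[OF assms(1)] by simp
  also have "\<dots> = a v" using assms(2) by simp
  finally show ?thesis .
qed

lemma fermat_notEv: "(\<forall>v\<le>n. \<alpha> \<noteq> Ev d v) \<Longrightarrow> fermat n d a \<alpha> = 0"
  unfolding fermat_def Ev_def[symmetric] by (intro sum.neutral) auto

lemma Ev_mem: "v \<le> n \<Longrightarrow> Ev d v \<in> deg_monos n d"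
  unfolding deg_monos_def Ev_def by auto

lemma finite_deg_monos: "finite (deg_monos n d)"
proof -
  have "deg_monos n d \<subseteq> {f. \<forall>x. (x \<in> {0..n} \<longrightarrow> f x \<in> {0..d}) \<and> (x \<notin> {0..n} \<longrightarrow> f x = 0)}"
  proof safe
    fix f x assume f: "f \<in> deg_monos n d" and x: "x \<in> {0..n}"
    then have "f x \<le> sum f {0..n}" by (intro member_le_sum) auto
    then show "f x \<in> {0..d}" using f by (auto simp: deg_monos_def)
  next
    fix f x assume f: "f \<in> deg_monos n d" and x: "x \<notin> {0..n}"
    then show "f x = 0" by (auto simp: deg_monos_def)
  qed
  then show ?thesis by (rule finite_subset) (intro finite_set_of_finite_funs, auto)
qed

lemma form_eval_fermat: assumes "d \<ge> 1"
  shows "form_eval n d (fermat n d a) x = (\<Sum>v\<in>{0..n}. a v * x v ^ d)"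
proof -
  have "form_eval n d (fermat n d a) x = (\<Sum>\<alpha>\<in>Ev d ` {0..n}. fermat n d a \<alpha> * (\<Prod>w\<in>{0..n}. x w ^ \<alpha> w))"
    unfolding form_eval_def
    by (rule sum.mono_neutral_right) (auto simp: finite_deg_monos Ev_mem intro!: fermat_notEv)
  also have "\<dots> = (\<Sum>v\<in>{0..n}. fermat n d a (Ev d v) * (\<Prod>w\<in>{0..n}. x w ^ Ev d v w))"
    by (rule sum.reindex_cong[where l="Ev d"]) (auto simp: inj_on_def Ev_inj[OF assms])
  also have "\<dots> = (\<Sum>v\<in>{0..n}. a v * x v ^ d)"
  proof (rule sum.cong)
    fix v assume v: "v \<in> {0..n}"
    have "(\<Prod>w\<in>{0..n}. x w ^ Ev d v w) = (\<Prod>w\<in>{0..n}. if w = v then x w ^ d else 1)"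
      by (rule prod.cong) (auto simp: Ev_def)
    also have "\<dots> = x v ^ d" using v by simp
    finally show "fermat n d a (Ev d v) * (\<Prod>w\<in>{0..n}. x w ^ Ev d v w) = a v * x v ^ d"
      using v fermat_Ev[OF assms] by simp
  qed simp
  finally show ?thesis .
qed

lemma fermat_nonsing: assumes "d \<ge> 1" "\<forall>v\<le>n. a v \<noteq> 0"
  shows "\<not> singular_form n d (fermat n d a)"
proof
  assume "singular_form n d (fermat n d a)"
  then obtain x where nz: "\<exists>v\<le>n. x v \<noteq> 0" and
    der: "\<forall>v\<le>n. ((\<lambda>t. form_eval n d (fermat n d a) (x(v := t))) has_field_derivative 0) (at (x v))"
    unfolding singular_form_def by blast
  have "x v = 0" if v: "v \<le> n" for v
  proof -
    have eq: "form_eval n d (fermat n d a) (x(v := t)) = a v * t ^ d + (\<Sum>w\<in>{0..n}-{v}. a w * x w ^ d)" for t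
    proof -
      have "form_eval n d (fermat n d a) (x(v := t)) = (\<Sum>w\<in>{0..n}. a w * (x(v:=t)) w ^ d)"
        by (rule form_eval_fermat[OF assms(1)])
      also have "\<dots> = a v * (x(v:=t)) v ^ d + (\<Sum>w\<in>{0..n}-{v}. a w * (x(v:=t)) w ^ d)"
        using v by (subst sum.remove[of _ v]) auto
      also have "(\<Sum>w\<in>{0..n}-{v}. a w * (x(v:=t)) w ^ d) = (\<Sum>w\<in>{0..n}-{v}. a w * x w ^ d)"
        by (rule sum.cong) auto
      finally show ?thesis by (simp only: fun_upd_same)
    qed
    have "((\<lambda>t. a v * t ^ d + (\<Sum>w\<in>{0..n}-{v}. a w * x w ^ d)) has_field_derivative
           a v * (of_nat d * x v ^ (d - 1))) (at (x v))"
      by (auto intro!: derivative_eq_intros)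
    moreover have "((\<lambda>t. a v * t ^ d + (\<Sum>w\<in>{0..n}-{v}. a w * x w ^ d)) has_field_derivative 0) (at (x v))"
      using der[rule_format, OF v] by (simp only: eq)
    ultimately have "a v * (of_nat d * x v ^ (d - 1)) = 0" by (rule DERIV_unique)
    then have "x v ^ (d - 1) = 0" using assms v by auto
    then show "x v = 0" by simp
  qed
  then show False using nz by blast
qed

lemma fermat_in_U: assumes "d \<ge> 1" "\<forall>v\<le>n. a v \<noteq> 0"
  shows "proj n d (fermat n d a) \<in> U_nd n d"
  unfolding U_nd_def
proof (rule imageI, safe)
  show "is_form n d (fermat n d a)" unfolding is_form_def
    using Ev_mem by (blast intro: fermat_notEv)
  show "fermat n d a = (\<lambda>_. 0) \<Longrightarrow> False"
    using fermat_Ev[OF assms(1), of 0 n a] assms by (metis le0)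
  show "singular_form n d (fermat n d a) \<Longrightarrow> False" using fermat_nonsing[OF assms] by blast
qed


definition Phi :: "nat \<Rightarrow> nat \<Rightarrow> (nat \<Rightarrow> real) \<Rightarrow> ((nat \<Rightarrow> nat) \<times> (nat \<Rightarrow> nat) \<Rightarrow> complex)" where
  "Phi n d \<theta> = proj n d (fermat n d (\<lambda>v. exp (2 * pi * \<i> * complex_of_real (\<theta> v))))"

lemma fermat_cong: "(\<forall>v\<le>n. a v = b v) \<Longrightarrow> fermat n d a = fermat n d b"
  unfolding fermat_def by (intro ext sum.cong) auto

lemma fermat_scale: "fermat n d (\<lambda>v. c * a v) = (\<lambda>\<alpha>. c * fermat n d a \<alpha>)"
  unfolding fermat_def by (auto simp: sum_distrib_left intro!: ext sum.cong)

lemma proj_scale: assumes "cmod c = 1" shows "proj n d (\<lambda>\<alpha>. c * F \<alpha>) = proj n d F"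
proof -
  have "c * cnj c = 1" using assms by (metis complex_norm_square mult.commute of_real_1 power_one)
  then show ?thesis unfolding proj_def
    by (auto simp: norm_mult assms intro!: ext)
qed

lemma Phi_per: assumes "\<forall>v\<le>n. \<theta> v - \<theta>' v \<in> \<int>" shows "Phi n d \<theta> = Phi n d \<theta>'"
  unfolding Phi_def
proof (rule arg_cong[where f="proj n d"], rule fermat_cong, safe)
  fix v assume v: "v \<le> n"
  then obtain k :: int where m: "\<theta> v = \<theta>' v + of_int k" using assms
    by (metis Ints_cases add_diff_cancel_left' diff_add_cancel)
  have "exp (2 * pi * \<i> * complex_of_real (\<theta> v)) =
        exp (2 * pi * \<i> * complex_of_real (\<theta>' v)) * exp ((2 * of_int k * pi) * \<i>)"
  proof -
    have e: "2 * pi * \<i> * complex_of_real (\<theta> v) = 2 * pi * \<i> * complex_of_real (\<theta>' v) + (2 * of_int k * pi) * \<i>"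
      by (simp add: m algebra_simps)
    show ?thesis unfolding e exp_add by (rule refl)
  qed
  also have "exp ((2 * of_int k * pi) * \<i>) = 1"
    using exp_integer_2pi[of "of_int k"] by simp
  finally show "exp (2 * pi * \<i> * complex_of_real (\<theta> v)) = exp (2 * pi * \<i> * complex_of_real (\<theta>' v))" by simp
qed

lemma Phi_cong: "(\<forall>v\<le>n. \<theta> v = \<theta>' v) \<Longrightarrow> Phi n d \<theta> = Phi n d \<theta>'"
  by (rule Phi_per) auto

lemma Phi_in_U: "d \<ge> 1 \<Longrightarrow> Phi n d \<theta> \<in> U_nd n d"
  unfolding Phi_def by (rule fermat_in_U) auto

lemma continuous_on_if_const [continuous_intros]:
  "continuous_on S f \<Longrightarrow> continuous_on S (\<lambda>x. if P then f x else c)"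
  by (cases P) auto

lemma cont_fermat: assumes "\<And>v. v \<le> n \<Longrightarrow> continuous_on S (\<lambda>p. a p v)"
  shows "continuous_on S (\<lambda>p. fermat n d (a p) \<gamma>)"
  unfolding fermat_def by (intro continuous_on_sum continuous_on_if_const assms) auto

lemma Phi_cont: assumes "d \<ge> 1" "\<And>v. v \<le> n \<Longrightarrow> continuous_on S (\<lambda>p. h p v)"
  shows "continuous_on S (\<lambda>p. Phi n d (h p))"
proof (rule continuous_on_coordinatewise_then_product)
  fix i :: "(nat \<Rightarrow> nat) \<times> (nat \<Rightarrow> nat)"
  obtain \<alpha> \<beta> where i: "i = (\<alpha>, \<beta>)" by fastforce
  define F where "F p = fermat n d (\<lambda>v. exp (2 * pi * \<i> * complex_of_real (h p v)))" for p
  have cF: "continuous_on S (\<lambda>p. F p \<gamma>)" for \<gamma>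
    unfolding F_def by (intro cont_fermat continuous_intros assms(2))
  have pos0: "(\<Sum>\<gamma>\<in>deg_monos n d. (cmod (F p \<gamma>))\<^sup>2) \<noteq> 0" for p
  proof -
    have "(cmod (F p (Ev d 0)))\<^sup>2 \<le> (\<Sum>\<gamma>\<in>deg_monos n d. (cmod (F p \<gamma>))\<^sup>2)"
      by (rule member_le_sum) (auto simp: finite_deg_monos Ev_mem)
    moreover have "F p (Ev d 0) = exp (2 * pi * \<i> * complex_of_real (h p 0))"
      unfolding F_def by (rule fermat_Ev[OF assms(1)]) simp
    moreover have "cmod (exp (2 * pi * \<i> * complex_of_real (h p 0))) = 1"
      by (simp add: norm_exp_eq_Re)
    ultimately show ?thesis by auto
  qed
  have pos: "complex_of_real (\<Sum>\<gamma>\<in>deg_monos n d. (cmod (F p \<gamma>))\<^sup>2) \<noteq> 0" for p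
    using pos0[of p] by (simp only: of_real_eq_0_iff not_False_eq_True)
  have "continuous_on S (\<lambda>p. F p \<alpha> * cnj (F p \<beta>) / complex_of_real (\<Sum>\<gamma>\<in>deg_monos n d. (cmod (F p \<gamma>))\<^sup>2))"
    apply (intro continuous_intros cF) using pos by blast+
  then show "continuous_on S (\<lambda>p. Phi n d (h p) i)"
    unfolding Phi_def proj_def i F_def by simp
qed

lemma HOM:
  fixes f g :: "real \<Rightarrow> nat \<Rightarrow> real"
  assumes d: "d \<ge> 1"
    and cf: "\<And>v. v \<le> n \<Longrightarrow> continuous_on {0..1} (\<lambda>t. f t v)"
    and cg: "\<And>v. v \<le> n \<Longrightarrow> continuous_on {0..1} (\<lambda>t. g t v)"
    and e0: "\<forall>v\<le>n. f 0 v = g 0 v" and e1: "\<forall>v\<le>n. f 1 v = g 1 v"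
    and p: "\<forall>t\<in>{0..1}. p t = Phi n d (f t)" and q: "\<forall>t\<in>{0..1}. q t = Phi n d (g t)"
  shows "homotopic_paths (U_nd n d) p q"
  unfolding homotopic_paths
proof (intro exI conjI)
  let ?h = "\<lambda>z. Phi n d (\<lambda>v. (1 - fst z) * f (snd z) v + fst z * g (snd z) v)"
  let ?S = "{0..1::real} \<times> {0..1::real}"
  have sub: "snd ` ?S \<subseteq> {0..1}" by auto
  show "continuous_on ?S ?h"
  proof (rule Phi_cont[OF d])
    fix v assume v: "v \<le> n"
    have "continuous_on ?S (\<lambda>z. f (snd z) v)"
      by (rule continuous_on_compose2[OF cf[OF v] _ sub]) (intro continuous_intros)
    moreover have "continuous_on ?S (\<lambda>z. g (snd z) v)"
      by (rule continuous_on_compose2[OF cg[OF v] _ sub]) (intro continuous_intros)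
    ultimately show "continuous_on ?S (\<lambda>z. (1 - fst z) * f (snd z) v + fst z * g (snd z) v)"
      by (intro continuous_intros)
  qed
  show "?h \<in> ?S \<rightarrow> U_nd n d" using Phi_in_U[OF d] by blast
  show "\<forall>x\<in>{0..1}. ?h (0, x) = p x" using p by simp
  show "\<forall>x\<in>{0..1}. ?h (1, x) = q x" using q by simp
  have p0: "p 0 = Phi n d (f 0)" and p1: "p 1 = Phi n d (f 1)" using p by auto
  show "\<forall>t\<in>{0..1}. pathstart (?h \<circ> Pair t) = pathstart p \<and> pathfinish (?h \<circ> Pair t) = pathfinish p"
    unfolding pathstart_def pathfinish_def p0 p1 using e0 e1
    by (auto intro!: Phi_cong simp: algebra_simps)
qed

lemma delta_Phi: "delta n d \<kappa> = (\<lambda>t. Phi n d (\<lambda>v. if v = \<kappa> then t else 0))"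
  unfolding delta_def Phi_def by (intro ext arg_cong[where f="proj n d"] arg_cong[where f="fermat n d"]) auto

lemma Phi_diag: "Phi n d (\<lambda>v. if v \<le> n then t else 0) = base_pt n d"
proof -
  let ?c = "exp (2 * pi * \<i> * complex_of_real t)"
  have "Phi n d (\<lambda>v. if v \<le> n then t else 0) = proj n d (fermat n d (\<lambda>v. ?c * 1))"
    unfolding Phi_def by (intro arg_cong[where f="proj n d"] fermat_cong) auto
  also have "\<dots> = proj n d (\<lambda>\<alpha>. ?c * fermat n d (\<lambda>_. 1) \<alpha>)" by (simp only: fermat_scale)
  also have "\<dots> = base_pt n d" unfolding base_pt_def
    by (rule proj_scale) (simp add: norm_exp_eq_Re)
  finally show ?thesis .
qed


definition LL :: "(nat \<Rightarrow> bool) \<Rightarrow> nat \<Rightarrow> real \<Rightarrow> nat \<Rightarrow> real" where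
  "LL P b t v = (if P v then min (2*t) 1 else 0) + (if v = b then max (2*t-1) 0 else 0)"

lemma join_eq: assumes "t \<in> {0..1}"
  shows "((\<lambda>t. Phi n d (\<lambda>v. if P v then t else 0)) +++ delta n d b) t = Phi n d (LL P b t)"
proof (cases "t \<le> 1/2")
  case True
  then show ?thesis unfolding joinpaths_def delta_Phi LL_def using assms
    by (auto intro!: Phi_cong)
next
  case False
  then have "(if v = b then 2*t-1 else 0) - LL P b t v \<in> \<int>" for v
    unfolding LL_def by auto
  then show ?thesis unfolding joinpaths_def delta_Phi using False
    by (auto intro!: Phi_per)
qed

lemma LL_cont: "continuous_on S (\<lambda>t. LL P b t v)"
  unfolding LL_def by (intro continuous_intros)

lemma LL_0: "LL P b 0 v = 0" unfolding LL_def by simp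
lemma LL_1: "LL P b 1 v = (if P v then 1 else 0) + (if v = b then 1 else 0)" unfolding LL_def by simp

theorem mainTheorem17:
  fixes n d :: nat
  assumes "n \<ge> 1" and "d \<ge> 2"
  shows "(\<forall>i\<le>n. \<forall>j\<le>n. homotopic_paths (U_nd n d)
            (delta n d i +++ delta n d j) (delta n d j +++ delta n d i))
       \<and> homotopic_paths (U_nd n d) (delta_prod n d n) (\<lambda>_. base_pt n d)"
proof
  have d: "d \<ge> 1" using assms by simp
  show "\<forall>i\<le>n. \<forall>j\<le>n. homotopic_paths (U_nd n d)
            (delta n d i +++ delta n d j) (delta n d j +++ delta n d i)"
  proof (intro allI impI)
    fix i j assume "i \<le> n" "j \<le> n"
    show "homotopic_paths (U_nd n d) (delta n d i +++ delta n d j) (delta n d j +++ delta n d i)"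
    proof (rule HOM[OF d, where f="LL (\<lambda>v. v = i) j" and g="LL (\<lambda>v. v = j) i"])
      show "\<forall>t\<in>{0..1}. (delta n d i +++ delta n d j) t = Phi n d (LL (\<lambda>v. v = i) j t)"
        using join_eq[of _ n d "\<lambda>v. v = i" j] by (simp add: delta_Phi)
      show "\<forall>t\<in>{0..1}. (delta n d j +++ delta n d i) t = Phi n d (LL (\<lambda>v. v = j) i t)"
        using join_eq[of _ n d "\<lambda>v. v = j" i] by (simp add: delta_Phi)
    qed (auto simp: LL_cont LL_0 LL_1)
  qed
  define D where "D k t v = (if v \<le> k then t else (0::real))" for k t and v :: nat
  have cD: "continuous_on S (\<lambda>t. D k t v)" for S k v unfolding D_def by (intro continuous_intros)
  have ind: "k \<le> n \<longrightarrow> homotopic_paths (U_nd n d) (delta_prod n d k) (\<lambda>t. Phi n d (D k t))" for k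
  proof (induction k)
    case 0
    show ?case
      by (intro impI, simp only: delta_prod.simps, rule HOM[OF d, where f="D 0" and g="D 0"]) (auto simp: delta_Phi D_def[abs_def] intro: continuous_intros)
  next
    case (Suc k)
    show ?case
    proof
      assume k: "Suc k \<le> n"
      have H1: "homotopic_paths (U_nd n d) (delta_prod n d k) (\<lambda>t. Phi n d (D k t))"
        using Suc k by simp
      have H2: "homotopic_paths (U_nd n d) (delta n d (Suc k)) (delta n d (Suc k))"
        by (rule HOM[OF d, where f="\<lambda>t v. if v = Suc k then t else 0" and g="\<lambda>t v. if v = Suc k then t else 0"])
           (auto simp: delta_Phi intro: continuous_intros)
      have "pathfinish (delta_prod n d k) = pathfinish (\<lambda>t. Phi n d (D k t))"
        using homotopic_paths_imp_pathfinish[OF H1] .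
      also have "\<dots> = pathstart (delta n d (Suc k))"
        unfolding pathfinish_def pathstart_def delta_Phi D_def by (auto intro!: Phi_per)
      finally have H12: "homotopic_paths (U_nd n d) (delta_prod n d k +++ delta n d (Suc k))
          ((\<lambda>t. Phi n d (D k t)) +++ delta n d (Suc k))"
        by (rule homotopic_paths_join[OF H1 H2])
      have H3: "homotopic_paths (U_nd n d) ((\<lambda>t. Phi n d (D k t)) +++ delta n d (Suc k)) (\<lambda>t. Phi n d (D (Suc k) t))"
      proof (rule HOM[OF d, where f="LL (\<lambda>v. v \<le> k) (Suc k)" and g="D (Suc k)"])
        show "\<forall>t\<in>{0..1}. ((\<lambda>t. Phi n d (D k t)) +++ delta n d (Suc k)) t = Phi n d (LL (\<lambda>v. v \<le> k) (Suc k) t)"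
          using join_eq[of _ n d "\<lambda>v. v \<le> k" "Suc k"] by (simp add: D_def[abs_def])
      qed (auto simp: LL_cont LL_0 LL_1 D_def intro: continuous_intros)
      show "homotopic_paths (U_nd n d) (delta_prod n d (Suc k)) (\<lambda>t. Phi n d (D (Suc k) t))"
        using homotopic_paths_trans[OF H12 H3] by simp
    qed
  qed
  have "homotopic_paths (U_nd n d) (\<lambda>t. Phi n d (D n t)) (\<lambda>_. base_pt n d)"
    by (rule HOM[OF d, where f="D n" and g="D n"]) (auto simp: cD Phi_diag D_def[abs_def])
  then show "homotopic_paths (U_nd n d) (delta_prod n d n) (\<lambda>_. base_pt n d)"
    using ind[of n] homotopic_paths_trans by blast
qed

end
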